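(* Let $n\ge3$, $\tau>0$, $\varepsilon\neq0$, and $\kappa\in so(n)$ fixed. Consider the generalized Demchenko case without twisting: curves $(\omega(t),\gamma(t))\in so(n)\times S^{n-1}$ with $\omega\in\mathbb R^n\wedge\gamma$ satisfying $$\tau\dot\omega=[\kappa,\omega]+\lambda_0,\qquad \dot\gamma=-\varepsilon\omega\gamma,$$ where $\lambda_0(t)\in so(n)$ is orthogonal to $\mathbb R^n\wedge\gamma$ (and is determined by the condition $\omega\in\mathbb R^n\wedge\gamma$). These equations reduce to the system on $T^*S^{n-1}=\{(\gamma,p):\langle\gamma,\gamma\rangle=1,\langle\gamma,p\rangle=0\}$ $$\dot\gamma=\frac{\varepsilon^2}\tau p,\qquad \dot p=\frac1\tau\kappa p+\mu\gamma,\qquad \mu=\frac1\tau\langle p,\kappa\gamma\rangle-\frac{\varepsilon^2}\tau\langle p,p\rangle,$$ which is the magnetic geodesic flow with Hamiltonian $h=\frac{\varepsilon^2}{2\tau}\langle p,p\rangle$ with respect to the Poisson bracket $$\{F,G\}_d=\{F,G\}^\kappa-\frac{\{F,\phi_1\}^\kappa\{G,\phi_2\}^\kappa-\{F,\phi_2\}^\kappa\{G,\phi_1\}^\kappa}{\{\phi_1,\phi_2\}^\kappa},$$ restricted to $T^*S^{n-1}$, where $\phi_1=\langle\gamma,\gamma\rangle$, $\phi_2=\langle\gamma,p\rangle$ and $\{F,G\}^\kappa=\sum_i\big(\frac{\partial F}{\partial\gamma_i}\frac{\partial G}{\partial p_i}-\frac{\partial F}{\partial p_i}\frac{\partial G}{\partial\gamma_i}\big)+\frac1{\varepsilon^2}\sum_{i,j}\kappa_{ij}\frac{\partial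 F}{\partial p_i}\frac{\partial G}{\partial p_j}$.
   Context: Physically: a balanced $n$-dimensional ball with gyroscope rolls without slipping and twisting over a fixed sphere, with $\varepsilon=b/(b\pm a)$ ($a,b$ the radii), and the modified inertia operator is $\mathbf I=\tau\,\mathrm{Id}_{so(n)}$. On $so(n)$, $\langle X,Y\rangle=-\frac12\operatorname{tr}(XY)$; on $\mathbb R^n$ the Euclidean product; $x\wedge y=xy^T-yx^T$; $\mathbb R^n\wedge\gamma=\{x\wedge\gamma:x\in\mathbb R^n\}$; $\kappa_{ij}$ are the entries of $\kappa$. "Reduce" means: for a solution, $p=\frac\tau{\varepsilon^2}\dot\gamma$ and $(\gamma,p)$ solves the stated system. *)

theory Defs
  imports "HOL-Analysis.Analysis"
begin

definition so :: "(real^'n^'n) set" where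
  "so = {X. transpose X = - X}"

definition so_inner :: "real^'n^'n \<Rightarrow> real^'n^'n \<Rightarrow> real" where
  "so_inner X Y = - (1/2) * trace (X ** Y)"

definition wedge :: "real^'n \<Rightarrow> real^'n \<Rightarrow> real^'n^'n" where
  "wedge x y = (\<chi> i j. x$i * y$j - y$i * x$j)"

definition lie_br :: "real^'n^'n \<Rightarrow> real^'n^'n \<Rightarrow> real^'n^'n" where
  "lie_br A B = A ** B - B ** A"

definition pd_gamma :: "((real^'n) \<times> (real^'n) \<Rightarrow> real) \<Rightarrow> (real^'n) \<times> (real^'n) \<Rightarrow> 'n \<Rightarrow> real" where
  "pd_gamma F z i = frechet_derivative F (at z) (axis i 1, 0)"

definition pd_p :: "((real^'n) \<times> (real^'n) \<Rightarrow> real) \<Rightarrow> (real^'n) \<times> (real^'n) \<Rightarrow> 'n \<Rightarrow> real" where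
  "pd_p F z i = frechet_derivative F (at z) (0, axis i 1)"

definition kappa_bracket :: "real \<Rightarrow> real^'n^'n \<Rightarrow> ((real^'n) \<times> (real^'n) \<Rightarrow> real)
    \<Rightarrow> ((real^'n) \<times> (real^'n) \<Rightarrow> real) \<Rightarrow> (real^'n) \<times> (real^'n) \<Rightarrow> real" where
  "kappa_bracket eps \<kappa> F G z =
     (\<Sum>i\<in>UNIV. pd_gamma F z i * pd_p G z i - pd_p F z i * pd_gamma G z i)
     + (1 / eps^2) * (\<Sum>i\<in>UNIV. \<Sum>j\<in>UNIV. \<kappa>$i$j * pd_p F z i * pd_p G z j)"

definition phi1 :: "(real^'n) \<times> (real^'n) \<Rightarrow> real" where
  "phi1 z = fst z \<bullet> fst z"

definition phi2 :: "(real^'n) \<times> (real^'n) \<Rightarrow> real" where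
  "phi2 z = fst z \<bullet> snd z"

definition dirac_bracket :: "real \<Rightarrow> real^'n^'n \<Rightarrow> ((real^'n) \<times> (real^'n) \<Rightarrow> real)
    \<Rightarrow> ((real^'n) \<times> (real^'n) \<Rightarrow> real) \<Rightarrow> (real^'n) \<times> (real^'n) \<Rightarrow> real" where
  "dirac_bracket eps \<kappa> F G z =
     kappa_bracket eps \<kappa> F G z
     - (kappa_bracket eps \<kappa> F phi1 z * kappa_bracket eps \<kappa> G phi2 z
        - kappa_bracket eps \<kappa> F phi2 z * kappa_bracket eps \<kappa> G phi1 z)
       / kappa_bracket eps \<kappa> phi1 phi2 z"

definition cotS :: "((real^'n) \<times> (real^'n)) set" where
  "cotS = {(g, p). g \<bullet> g = 1 \<and> g \<bullet> p = 0}"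

definition ham :: "real \<Rightarrow> real \<Rightarrow> (real^'n) \<times> (real^'n) \<Rightarrow> real" where
  "ham eps \<tau> z = eps^2 / (2 * \<tau>) * (snd z \<bullet> snd z)"

definition mu :: "real \<Rightarrow> real \<Rightarrow> real^'n^'n \<Rightarrow> real^'n \<Rightarrow> real^'n \<Rightarrow> real" where
  "mu eps \<tau> \<kappa> g p = (1/\<tau>) * (p \<bullet> (\<kappa> *v g)) - (eps^2/\<tau>) * (p \<bullet> p)"

definition red_field :: "real \<Rightarrow> real \<Rightarrow> real^'n^'n \<Rightarrow> (real^'n) \<times> (real^'n) \<Rightarrow> (real^'n) \<times> (real^'n)" where
  "red_field eps \<tau> \<kappa> z =
     ((eps^2/\<tau>) *\<^sub>R snd z,
      (1/\<tau>) *\<^sub>R (\<kappa> *v snd z) + mu eps \<tau> \<kappa> (fst z) (snd z) *\<^sub>R fst z)"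

end

theory Submission
  imports Defs
begin


lemma bb_mv: "bounded_bilinear (\<lambda>(A::real^'n^'n) (v::real^'n). A *v v)"
  unfolding bilinear_conv_bounded_bilinear[symmetric] bilinear_def
  by (auto simp: linear_iff matrix_vector_mult_def vec_eq_iff algebra_simps sum.distrib sum_distrib_left)

lemma wedge_mv: "wedge x g *v v = (g \<bullet> v) *\<^sub>R x - (x \<bullet> v) *\<^sub>R g"
  by (simp add: vec_eq_iff wedge_def matrix_vector_mult_def inner_vec_def algebra_simps
      sum_subtractf sum_distrib_left)

lemma trace_wedge: "trace (L ** wedge x g) = g \<bullet> (L *v x) - x \<bullet> (L *v g)"
  by (simp add: trace_def wedge_def matrix_matrix_mult_def matrix_vector_mult_def inner_vec_def
      algebra_simps sum_subtractf sum_distrib_left)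

lemma skew_inner: assumes "L \<in> so" shows "g \<bullet> (L *v x) = - (x \<bullet> (L *v g))"
proof -
  have T: "transpose L = - L" using assms by (simp add: so_def)
  have L: "\<And>i k. L$k$i = - L$i$k"
  proof -
    fix i k
    have "L$k$i = transpose L $i$k" by (simp add: transpose_def)
    then show "L$k$i = - L$i$k" by (simp add: T)
  qed
  have "g \<bullet> (L *v x) = (\<Sum>i\<in>UNIV. \<Sum>k\<in>UNIV. g$i * L$i$k * x$k)"
    by (simp add: inner_vec_def matrix_vector_mult_def sum_distrib_left mult.assoc)
  also have "\<dots> = (\<Sum>k\<in>UNIV. \<Sum>i\<in>UNIV. g$i * L$i$k * x$k)" by (rule sum.swap)
  also have "\<dots> = (\<Sum>k\<in>UNIV. \<Sum>i\<in>UNIV. - (x$k * (L$k$i * g$i)))"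
  proof (intro sum.cong refl)
    fix k i
    show "g$i * L$i$k * x$k = - (x$k * (L$k$i * g$i))" using L[of i k] by simp
  qed
  also have "\<dots> = - (x \<bullet> (L *v g))"
    by (simp add: inner_vec_def matrix_vector_mult_def sum_distrib_left sum_negf)
  finally show ?thesis .
qed

lemma skew_zero: assumes "L \<in> so" shows "g \<bullet> (L *v g) = 0"
  using skew_inner[OF assms, of g g] by simp

lemma lam_zero: assumes "L \<in> so" "\<And>x. so_inner L (wedge x g) = 0" shows "L *v g = 0"
proof -
  have "trace (L ** wedge (L *v g) g) = 0" using assms(2)[of "L *v g"] by (simp add: so_inner_def)
  then have "g \<bullet> (L *v (L *v g)) - (L *v g) \<bullet> (L *v g) = 0" by (simp add: trace_wedge)
  then have "(L *v g) \<bullet> (L *v g) = 0" using skew_inner[OF assms(1), of g "L *v g"] by simp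
  then show ?thesis by simp
qed

lemma lin_expand: assumes "linear L"
  shows "L (u::real^'n, v::real^'n) = (\<Sum>i\<in>UNIV. u$i * L (axis i 1, 0)) + (\<Sum>i\<in>UNIV. v$i * L (0, axis i 1))"
proof -
  have "(u, v) = (\<Sum>i\<in>UNIV. u$i *\<^sub>R (axis i 1, 0)) + (\<Sum>i\<in>UNIV. v$i *\<^sub>R (0, axis i 1))"
  proof -
    have u: "(\<Sum>i\<in>UNIV. u$i *\<^sub>R axis i 1) = u" using basis_expansion[of u] by (simp add: scalar_mult_eq_scaleR)
    have v: "(\<Sum>i\<in>UNIV. v$i *\<^sub>R axis i 1) = v" using basis_expansion[of v] by (simp add: scalar_mult_eq_scaleR)
    show ?thesis by (simp add: sum_prod u v)
  qed
  then have "L (u,v) = L ((\<Sum>i\<in>UNIV. u$i *\<^sub>R (axis i 1, 0)) + (\<Sum>i\<in>UNIV. v$i *\<^sub>R (0, axis i 1)))"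
    by (rule arg_cong)
  also have "\<dots> = (\<Sum>i\<in>UNIV. u$i *\<^sub>R L (axis i 1, 0)) + (\<Sum>i\<in>UNIV. v$i *\<^sub>R L (0, axis i 1))"
    by (simp only: linear_add[OF assms] linear_sum[OF assms] linear_scale[OF assms] o_def)
  finally show ?thesis by simp
qed


lemma kb_vec: "kappa_bracket eps \<kappa> F G z =
   (\<chi> i. pd_gamma F z i) \<bullet> (\<chi> i. pd_p G z i) - (\<chi> i. pd_p F z i) \<bullet> (\<chi> i. pd_gamma G z i)
   + (1/eps^2) * ((\<chi> i. pd_p F z i) \<bullet> (\<kappa> *v (\<chi> i. pd_p G z i)))"
  unfolding kappa_bracket_def inner_vec_def matrix_vector_mult_def
  by (simp add: sum_subtractf sum_distrib_left mult.assoc mult.left_commute)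

lemma fd_eq: "(f has_derivative f') (at z) \<Longrightarrow> frechet_derivative f (at z) = f'"
  using frechet_derivative_at by metis

lemma ham_d: "frechet_derivative (ham eps \<tau>) (at z) = (\<lambda>w. eps^2/(2*\<tau>) * (snd w \<bullet> snd z + snd z \<bullet> snd w))"
  apply (rule fd_eq) unfolding ham_def[abs_def]
  apply (rule has_derivative_mult_right)
  by (auto intro!: derivative_eq_intros)

lemma phi1_d: "frechet_derivative phi1 (at z) = (\<lambda>w. fst w \<bullet> fst z + fst z \<bullet> fst w)"
  apply (rule fd_eq) unfolding phi1_def[abs_def]
  by (auto intro!: derivative_eq_intros)

lemma phi2_d: "frechet_derivative phi2 (at z) = (\<lambda>w. fst w \<bullet> snd z + fst z \<bullet> snd w)"
  apply (rule fd_eq) unfolding phi2_def[abs_def]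
  by (auto intro!: derivative_eq_intros)

lemma ham_g: "(\<chi> i. pd_gamma (ham eps \<tau>) z i) = 0"
  by (simp add: pd_gamma_def ham_d vec_eq_iff)
lemma ham_p: "(\<chi> i. pd_p (ham eps \<tau>) z i) = (eps^2/\<tau>) *\<^sub>R snd z"
  by (simp add: pd_p_def ham_d vec_eq_iff inner_axis inner_axis' field_simps)
lemma phi1_g: "(\<chi> i. pd_gamma phi1 z i) = 2 *\<^sub>R fst z"
  by (simp add: pd_gamma_def phi1_d vec_eq_iff inner_axis inner_axis')
lemma phi1_p: "(\<chi> i. pd_p phi1 z i) = 0"
  by (simp add: pd_p_def phi1_d vec_eq_iff)
lemma phi2_g: "(\<chi> i. pd_gamma phi2 z i) = snd z"
  by (simp add: pd_gamma_def phi2_d vec_eq_iff inner_axis inner_axis')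
lemma phi2_p: "(\<chi> i. pd_p phi2 z i) = fst z"
  by (simp add: pd_p_def phi2_d vec_eq_iff inner_axis inner_axis')

lemma F_d: assumes "F differentiable (at z)"
  shows "frechet_derivative F (at z) (u, v) = (\<chi> i. pd_gamma F z i) \<bullet> u + (\<chi> i. pd_p F z i) \<bullet> v"
proof -
  have "linear (frechet_derivative F (at z))"
    using assms frechet_derivative_works has_derivative_linear by blast
  note le = lin_expand[OF this, of u v]
  have 1: "(\<chi> i. pd_gamma F z i) \<bullet> u = (\<Sum>i\<in>UNIV. u$i * frechet_derivative F (at z) (axis i 1, 0))"
    unfolding inner_vec_def pd_gamma_def inner_real_def vec_lambda_beta
    by (intro sum.cong refl) (rule mult.commute)
  have 2: "(\<chi> i. pd_p F z i) \<bullet> v = (\<Sum>i\<in>UNIV. v$i * frechet_derivative F (at z) (0, axis i 1))"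
    unfolding inner_vec_def pd_p_def inner_real_def vec_lambda_beta
    by (intro sum.cong refl) (rule mult.commute)
  show ?thesis unfolding 1 2 le ..
qed

lemma part2: assumes k: "\<kappa> \<in> so" and z: "z \<in> cotS" and F: "F differentiable (at z)"
  and tau: "\<tau> > 0" and eps: "eps \<noteq> 0"
  shows "frechet_derivative F (at z) (red_field eps \<tau> \<kappa> z) = dirac_bracket eps \<kappa> F (ham eps \<tau>) z"
proof -
  obtain g p where zp: "z = (g, p)" and gg: "g \<bullet> g = 1" and gp: "g \<bullet> p = 0"
    using z unfolding cotS_def by auto
  have kg: "g \<bullet> (\<kappa> *v g) = 0" using skew_zero[OF k] .
  have kp: "p \<bullet> (\<kappa> *v g) = - (g \<bullet> (\<kappa> *v p))" using skew_inner[OF k] .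
  define a where "a = (\<chi> i. pd_gamma F z i)"
  define b where "b = (\<chi> i. pd_p F z i)"
  have e: "frechet_derivative F (at z) (red_field eps \<tau> \<kappa> z)
      = (eps^2/\<tau>) * (a \<bullet> p) + (1/\<tau>) * (b \<bullet> (\<kappa> *v p)) + mu eps \<tau> \<kappa> g p * (b \<bullet> g)"
    using F_d[OF F, of "fst (red_field eps \<tau> \<kappa> z)" "snd (red_field eps \<tau> \<kappa> z)"]
    unfolding a_def[symmetric] b_def[symmetric]
    by (simp add: red_field_def zp inner_add_right inner_scaleR_right)
  have b1: "kappa_bracket eps \<kappa> F (ham eps \<tau>) z = (eps^2/\<tau>) * (a \<bullet> p) + (1/\<tau>) * (b \<bullet> (\<kappa> *v p))"
    unfolding kb_vec ham_g ham_p a_def[symmetric] b_def[symmetric] using eps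
    by (simp add: zp matrix_vector_mult_scaleR inner_scaleR_right)
  have b2: "kappa_bracket eps \<kappa> F phi1 z = - 2 * (b \<bullet> g)"
    unfolding kb_vec phi1_g phi1_p a_def[symmetric] b_def[symmetric]
    by (simp add: zp matrix_vector_mult_scaleR inner_scaleR_right)
  have b3: "kappa_bracket eps \<kappa> (ham eps \<tau>) phi1 z = 0"
    unfolding kb_vec phi1_g phi1_p ham_g ham_p
    by (simp add: zp inner_scaleR_left gp inner_commute)
  have b4: "kappa_bracket eps \<kappa> (ham eps \<tau>) phi2 z = mu eps \<tau> \<kappa> g p"
    unfolding kb_vec phi2_g phi2_p ham_g ham_p mu_def using eps
    by (simp add: zp inner_scaleR_left)
  have b5: "kappa_bracket eps \<kappa> phi1 phi2 z = 2"
    unfolding kb_vec phi2_g phi2_p phi1_g phi1_p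
    by (simp add: zp inner_scaleR_left gg)
  have d: "dirac_bracket eps \<kappa> F (ham eps \<tau>) z = (eps^2/\<tau>) * (a \<bullet> p) + (1/\<tau>) * (b \<bullet> (\<kappa> *v p))
     - ((- 2 * (b \<bullet> g)) * mu eps \<tau> \<kappa> g p - kappa_bracket eps \<kappa> F phi2 z * 0) / 2"
    unfolding dirac_bracket_def b1 b2 b3 b4 b5 by (rule refl)
  show ?thesis unfolding e d by simp
qed


lemma val_alg:
  fixes x g :: "real^'n" and \<kappa> :: "real^'n^'n"
  assumes gg: "g \<bullet> g = 1" and kg: "g \<bullet> (\<kappa> *v g) = 0" and kx: "g \<bullet> (\<kappa> *v x) = - (x \<bullet> (\<kappa> *v g))"
   and e: "eps \<noteq> 0" and t: "\<tau> > 0" and c: "c = x \<bullet> g"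
  shows "(-(\<tau>/eps)) *\<^sub>R (wedge x g *v (-eps *\<^sub>R (x - c*\<^sub>R g)) + (1/\<tau>) *\<^sub>R (\<kappa> *v (x - c*\<^sub>R g) - wedge x g *v (\<kappa> *v g)))
     = (1/\<tau>) *\<^sub>R (\<kappa> *v ((-(\<tau>/eps)) *\<^sub>R (x - c *\<^sub>R g))) + mu eps \<tau> \<kappa> g ((-(\<tau>/eps)) *\<^sub>R (x - c *\<^sub>R g)) *\<^sub>R g"
proof -
  have i1: "g \<bullet> x = c" "x \<bullet> g = c" using c by (auto simp: inner_commute)
  define k where "k = x \<bullet> (\<kappa> *v g)"
  have w1: "wedge x g *v (x - c *\<^sub>R g) = - ((x \<bullet> x - c*c) *\<^sub>R g)"
    unfolding wedge_mv by (simp add: inner_diff_right i1 gg)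
  have w2: "wedge x g *v (\<kappa> *v g) = (- k) *\<^sub>R g"
    unfolding wedge_mv k_def by (simp add: kg)
  have k1: "\<kappa> *v (x - c *\<^sub>R g) = \<kappa> *v x - c *\<^sub>R (\<kappa> *v g)"
    by (simp add: matrix_vector_mult_diff_distrib matrix_vector_mult_scaleR)
  have k2: "\<kappa> *v ((-(\<tau>/eps)) *\<^sub>R (x - c *\<^sub>R g)) = (-(\<tau>/eps)) *\<^sub>R (\<kappa> *v x - c *\<^sub>R (\<kappa> *v g))"
    using matrix_vector_mult_scaleR[of \<kappa> "-(\<tau>/eps)" "x - c *\<^sub>R g"] k1 by simp
  have m: "mu eps \<tau> \<kappa> g ((-(\<tau>/eps)) *\<^sub>R (x - c *\<^sub>R g)) = (1/\<tau>) * (-(\<tau>/eps)) * k - (eps^2/\<tau>) * (\<tau>/eps)^2 * (x \<bullet> x - c*c)"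
    unfolding mu_def k_def using e t
    by (simp add: inner_diff_left inner_diff_right i1 gg kg inner_commute power2_eq_square field_simps)
  have ms: "wedge x g *v (-eps *\<^sub>R (x - c*\<^sub>R g)) = -eps *\<^sub>R (- ((x \<bullet> x - c*c) *\<^sub>R g))"
    by (simp only: matrix_vector_mult_scaleR w1)
  show ?thesis unfolding ms w2 k1 k2 m using e t
    by (simp add: vec_eq_iff field_simps power2_eq_square)
qed

theorem proposition9p2:
  fixes \<tau> eps :: real and \<kappa> :: "real^'n^'n"
    and I :: "real set"
    and \<omega> lam0 :: "real \<Rightarrow> real^'n^'n" and \<gamma> :: "real \<Rightarrow> real^'n"
  assumes n3: "CARD('n) \<ge> 3"
    and tau_pos: "\<tau> > 0" and eps_nz: "eps \<noteq> 0"
    and kappa_so: "\<kappa> \<in> so"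
    and I_open: "open I"
    and gamma_sphere: "\<And>t. t \<in> I \<Longrightarrow> norm (\<gamma> t) = 1"
    and omega_wedge: "\<And>t. t \<in> I \<Longrightarrow> \<exists>x. \<omega> t = wedge x (\<gamma> t)"
    and lambda_so: "\<And>t. t \<in> I \<Longrightarrow> lam0 t \<in> so"
    and lambda_orth: "\<And>t x. t \<in> I \<Longrightarrow> so_inner (lam0 t) (wedge x (\<gamma> t)) = 0"
    and eq_omega: "\<And>t. t \<in> I \<Longrightarrow>
        (\<omega> has_vector_derivative ((1/\<tau>) *\<^sub>R (lie_br \<kappa> (\<omega> t) + lam0 t))) (at t)"
    and eq_gamma: "\<And>t. t \<in> I \<Longrightarrow>
        (\<gamma> has_vector_derivative (- eps *\<^sub>R (\<omega> t *v \<gamma> t))) (at t)"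
  shows
    "(\<forall>t\<in>I.
        let p = (\<lambda>s. (\<tau> / eps^2) *\<^sub>R vector_derivative \<gamma> (at s)) in
          (\<gamma> t, p t) \<in> cotS
        \<and> (\<gamma> has_vector_derivative ((eps^2/\<tau>) *\<^sub>R p t)) (at t)
        \<and> (p has_vector_derivative
              ((1/\<tau>) *\<^sub>R (\<kappa> *v p t) + mu eps \<tau> \<kappa> (\<gamma> t) (p t) *\<^sub>R \<gamma> t)) (at t))
     \<and> (\<forall>z\<in>cotS. \<forall>F::(real^'n) \<times> (real^'n) \<Rightarrow> real. F differentiable (at z) \<longrightarrow>
          frechet_derivative F (at z) (red_field eps \<tau> \<kappa> z)
            = dirac_bracket eps \<kappa> F (ham eps \<tau>) z)"
proof
  show "\<forall>z\<in>cotS. \<forall>F::(real^'n) \<times> (real^'n) \<Rightarrow> real. F differentiable (at z) \<longrightarrow>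
          frechet_derivative F (at z) (red_field eps \<tau> \<kappa> z)
            = dirac_bracket eps \<kappa> F (ham eps \<tau>) z"
    using part2[OF kappa_so _ _ tau_pos eps_nz] by blast
next
  show "\<forall>t\<in>I.
        let p = (\<lambda>s. (\<tau> / eps^2) *\<^sub>R vector_derivative \<gamma> (at s)) in
          (\<gamma> t, p t) \<in> cotS
        \<and> (\<gamma> has_vector_derivative ((eps^2/\<tau>) *\<^sub>R p t)) (at t)
        \<and> (p has_vector_derivative
              ((1/\<tau>) *\<^sub>R (\<kappa> *v p t) + mu eps \<tau> \<kappa> (\<gamma> t) (p t) *\<^sub>R \<gamma> t)) (at t)"
  proof
    fix t assume t: "t \<in> I"
    define p where "p = (\<lambda>s. (\<tau> / eps^2) *\<^sub>R vector_derivative \<gamma> (at s))"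
    obtain x where wx: "\<omega> t = wedge x (\<gamma> t)" using omega_wedge[OF t] by blast
    define g where "g = \<gamma> t"
    define c where "c = x \<bullet> g"
    have gg: "g \<bullet> g = 1" using gamma_sphere[OF t] power2_norm_eq_inner[of g] unfolding g_def by simp
    have y: "\<omega> t *v \<gamma> t = x - c *\<^sub>R g"
      unfolding wx wedge_mv g_def[symmetric] c_def using gg by (simp add: inner_commute)
    have vd: "\<And>s. s \<in> I \<Longrightarrow> vector_derivative \<gamma> (at s) = - eps *\<^sub>R (\<omega> s *v \<gamma> s)"
      using eq_gamma vector_derivative_at by blast
    have pt: "p t = (- (\<tau>/eps)) *\<^sub>R (x - c *\<^sub>R g)"
      unfolding p_def using vd[OF t] y eps_nz by (simp add: power2_eq_square)
    have lz: "lam0 t *v g = 0" unfolding g_def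
      using lam_zero[OF lambda_so[OF t] lambda_orth[OF t]] .
    have kg: "g \<bullet> (\<kappa> *v g) = 0" using skew_zero[OF kappa_so] .
    have kx: "g \<bullet> (\<kappa> *v x) = - (x \<bullet> (\<kappa> *v g))" using skew_inner[OF kappa_so] .
    have c1: "(\<gamma> t, p t) \<in> cotS"
      unfolding cotS_def using gg pt by (simp add: g_def[symmetric] inner_simps c_def inner_commute)
    have c2: "(\<gamma> has_vector_derivative ((eps^2/\<tau>) *\<^sub>R p t)) (at t)"
    proof -
      have "(eps^2/\<tau>) *\<^sub>R p t = - eps *\<^sub>R (\<omega> t *v \<gamma> t)"
        unfolding p_def using vd[OF t] eps_nz tau_pos by simp
      then show ?thesis using eq_gamma[OF t] by simp
    qed
    have bil: "((\<lambda>s. \<omega> s *v \<gamma> s) has_vector_derivative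
        (\<omega> t *v (- eps *\<^sub>R (\<omega> t *v \<gamma> t)) + ((1/\<tau>) *\<^sub>R (lie_br \<kappa> (\<omega> t) + lam0 t)) *v \<gamma> t)) (at t)"
      using bounded_bilinear.has_vector_derivative[OF bb_mv eq_omega[OF t] eq_gamma[OF t]] by simp
    have q: "((\<lambda>s. (- (\<tau>/eps)) *\<^sub>R (\<omega> s *v \<gamma> s)) has_vector_derivative
        (- (\<tau>/eps)) *\<^sub>R (\<omega> t *v (- eps *\<^sub>R (\<omega> t *v \<gamma> t)) + ((1/\<tau>) *\<^sub>R (lie_br \<kappa> (\<omega> t) + lam0 t)) *v \<gamma> t)) (at t)"
      using has_vector_derivative_scaleR[OF DERIV_const[where k="-(\<tau>/eps)"] bil] by simp
    have pq: "\<And>s. s \<in> I \<Longrightarrow> (- (\<tau>/eps)) *\<^sub>R (\<omega> s *v \<gamma> s) = p s"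
      unfolding p_def using vd eps_nz by (simp add: power2_eq_square)
    have val: "(- (\<tau>/eps)) *\<^sub>R (\<omega> t *v (- eps *\<^sub>R (\<omega> t *v \<gamma> t)) + ((1/\<tau>) *\<^sub>R (lie_br \<kappa> (\<omega> t) + lam0 t)) *v \<gamma> t)
        = (1/\<tau>) *\<^sub>R (\<kappa> *v p t) + mu eps \<tau> \<kappa> (\<gamma> t) (p t) *\<^sub>R \<gamma> t"
    proof -
      have e1: "((1/\<tau>) *\<^sub>R (lie_br \<kappa> (\<omega> t) + lam0 t)) *v g
          = (1/\<tau>) *\<^sub>R (\<kappa> *v (\<omega> t *v g) - \<omega> t *v (\<kappa> *v g))"
        unfolding lie_br_def g_def
        using lz unfolding g_def
        by (simp add: scaleR_matrix_vector_assoc[symmetric] matrix_vector_mult_add_rdistrib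
            matrix_vector_mult_diff_rdistrib matrix_vector_mul_assoc)
      show ?thesis
        unfolding g_def[symmetric]
        unfolding e1 pt y[unfolded g_def[symmetric]]
        unfolding wx[unfolded g_def[symmetric]]
        using val_alg[OF gg kg kx eps_nz tau_pos c_def] .
    qed
    have c3: "(p has_vector_derivative
              ((1/\<tau>) *\<^sub>R (\<kappa> *v p t) + mu eps \<tau> \<kappa> (\<gamma> t) (p t) *\<^sub>R \<gamma> t)) (at t)"
      using has_vector_derivative_transform_within_open[OF q I_open t pq] val by simp
    show "let p = (\<lambda>s. (\<tau> / eps^2) *\<^sub>R vector_derivative \<gamma> (at s)) in
          (\<gamma> t, p t) \<in> cotS
        \<and> (\<gamma> has_vector_derivative ((eps^2/\<tau>) *\<^sub>R p t)) (at t)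
        \<and> (p has_vector_derivative
              ((1/\<tau>) *\<^sub>R (\<kappa> *v p t) + mu eps \<tau> \<kappa> (\<gamma> t) (p t) *\<^sub>R \<gamma> t)) (at t)"
      unfolding Let_def p_def[symmetric] using c1 c2 c3 by blast
  qed
qed

end
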